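(* Let $X$ be an $\mathcal M$-set, let $A\subset\omega$ be co-infinite, and let $x\in X$ be supported on $A$. Then: (1) if $f,g\in\mathcal M$ agree on $A$, then $f.x=g.x$; (2) for every $f\in\mathcal M$, $f.x$ is supported on $f(A)$; (3) if $f\in\mathcal M$ and $A'\subset A$ are such that $f.x$ is supported on $f(A')$, then $x$ is supported on $A'$.
   Context: $\omega=\{1,2,3,\dots\}$, $\mathcal M$ the monoid of injections $\omega\to\omega$; an $\mathcal M$-set is a set with left $\mathcal M$-action. For $A\subset\omega$, $\mathcal M_A$ is the submonoid of injections fixing $A$ elementwise, and $x$ is supported on $A$ if $f.x=x$ for all $f\in\mathcal M_A$. $A$ is co-infinite if $\omega\setminus A$ is infinite. *)

theory Defs
  imports Main
begin

text \<open>An injection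
omega to omega is represented canonically as a function nat to nat that is
injective, maps positive numbers to positive numbers and fixes 0 (so each
injection of omega has exactly one representative).\<close>

definition omega :: "nat set" where
  "omega = {n. 0 < n}"

definition Mon :: "(nat \<Rightarrow> nat) set" where
  "Mon = {f. inj f \<and> f 0 = 0 \<and> (\<forall>n\<in>omega. f n \<in> omega)}"

definition M_set :: "'x set \<Rightarrow> ((nat \<Rightarrow> nat) \<Rightarrow> 'x \<Rightarrow> 'x) \<Rightarrow> bool" where
  "M_set X act \<longleftrightarrow>
     (\<forall>f\<in>Mon. \<forall>x\<in>X. act f x \<in> X) \<and>
     (\<forall>x\<in>X. act id x = x) \<and>
     (\<forall>f\<in>Mon. \<forall>g\<in>Mon. \<forall>x\<in>X. act (f \<circ> g) x = act f (act g x))"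

definition Mon_fix :: "nat set \<Rightarrow> (nat \<Rightarrow> nat) set" where
  "Mon_fix A = {f \<in> Mon. \<forall>a\<in>A. f a = a}"

definition supported_on :: "((nat \<Rightarrow> nat) \<Rightarrow> 'x \<Rightarrow> 'x) \<Rightarrow> 'x \<Rightarrow> nat set \<Rightarrow> bool" where
  "supported_on act x A \<longleftrightarrow> (\<forall>f\<in>Mon_fix A. act f x = x)"

definition co_infinite :: "nat set \<Rightarrow> bool" where
  "co_infinite A \<longleftrightarrow> infinite (omega - A)"

end

theory Submission
  imports Defs "HOL-Library.Infinite_Set"
begin

lemma Mon_comp: "f \<in> Mon \<Longrightarrow> g \<in> Mon \<Longrightarrow> f \<circ> g \<in> Mon"
  unfolding Mon_def by (auto intro: inj_compose)

lemma Mon_id: "id \<in> Mon"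
  unfolding Mon_def by auto

lemma act_comp: "M_set X act \<Longrightarrow> f \<in> Mon \<Longrightarrow> g \<in> Mon \<Longrightarrow> x \<in> X \<Longrightarrow> act (f \<circ> g) x = act f (act g x)"
  unfolding M_set_def by blast

lemma act_id: "M_set X act \<Longrightarrow> x \<in> X \<Longrightarrow> act id x = x"
  unfolding M_set_def by blast

lemma ext_Mon:
  assumes S: "S \<subseteq> omega" and phi: "inj_on phi S" "phi ` S \<subseteq> omega"
    and E: "E \<subseteq> omega - phi ` S" "infinite E"
    and idx: "inj_on idx (omega - S)"
  shows "(\<lambda>n. if n \<in> S then phi n else if n = 0 then 0 else enumerate E (idx n)) \<in> Mon"
proof -
  let ?h = "\<lambda>n. if n \<in> S then phi n else if n = 0 then 0 else enumerate E (idx n)"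
  have eE: "enumerate E m \<in> E" for m using enumerate_in_set[OF E(2)] .
  have ie: "inj (enumerate E)" using inj_enumerate[OF E(2)] .
  have z: "0 \<notin> S" using S unfolding omega_def by auto
  have inj: "inj ?h"
  proof (rule injI)
    fix a b assume eq: "?h a = ?h b"
    show "a = b"
    proof (cases "a \<in> S")
      case True
      then have pa: "phi a \<in> omega" "phi a \<in> phi ` S" using phi by auto
      show ?thesis
      proof (cases "b \<in> S")
        case True then show ?thesis using eq \<open>a \<in> S\<close> phi(1) by (auto dest: inj_onD)
      next
        case False
        then show ?thesis using eq \<open>a \<in> S\<close> pa eE[of "idx b"] E(1) unfolding omega_def
          by (auto split: if_splits)
      qed
    next
      case False
      show ?thesis
      proof (cases "b \<in> S")
        case True
        then have pb: "phi b \<in> omega" "phi b \<in> phi ` S" using phi by auto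
        then show ?thesis using eq \<open>a \<notin> S\<close> True eE[of "idx a"] E(1) unfolding omega_def
          by (auto split: if_splits)
      next
        case F2: False
        have ne: "enumerate E m \<noteq> 0" for m using eE[of m] E(1) unfolding omega_def by auto
        show ?thesis
        proof (cases "a = 0 \<or> b = 0")
          case True then show ?thesis using eq False F2 ne by (auto split: if_splits) (metis ne)+
        next
          case nz: False
          then have "enumerate E (idx a) = enumerate E (idx b)" using eq False F2 by auto
          then have "idx a = idx b" using ie by (auto dest: injD)
          moreover have "a \<in> omega - S" "b \<in> omega - S" using nz False F2 unfolding omega_def by auto
          ultimately show ?thesis using idx by (auto dest: inj_onD)
        qed
      qed
    qed
  qed
  moreover have "?h 0 = 0" using z by simp
  moreover have "\<forall>n\<in>omega. ?h n \<in> omega"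
    using phi(2) eE E(1) unfolding omega_def by auto
  ultimately show ?thesis unfolding Mon_def by blast
qed

lemma range_lemma:
  assumes M: "M_set X act" and y: "y \<in> X" and sup: "supported_on act y S"
    and f: "f \<in> Mon" and h: "h \<in> Mon" and agree: "\<forall>a\<in>S. f a = h a"
    and rng: "range f \<subseteq> range h"
  shows "act f y = act h y"
proof -
  define k where "k = (\<lambda>n. inv h (f n))"
  have hk: "h (k n) = f n" for n unfolding k_def using rng by (meson f_inv_into_f rangeI subsetD)
  have hinj: "inj h" using h unfolding Mon_def by auto
  have finj: "inj f" using f unfolding Mon_def by auto
  have h0: "h 0 = 0" using h unfolding Mon_def by auto
  have f0: "f 0 = 0" using f unfolding Mon_def by auto
  have kinj: "inj k" by (rule injI) (metis hk finj injD)
  have k0: "k 0 = 0" unfolding k_def using f0 h0 hinj by (metis inv_f_f)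
  have kom: "\<forall>n\<in>omega. k n \<in> omega"
  proof
    fix n assume "n \<in> omega"
    then have "f n \<in> omega" using f unfolding Mon_def by auto
    then have "f n \<noteq> 0" unfolding omega_def by auto
    then have "k n \<noteq> 0" using hk h0 by metis
    then show "k n \<in> omega" unfolding omega_def by auto
  qed
  have kfix: "\<forall>a\<in>S. k a = a" unfolding k_def using agree hinj by (simp add: inv_f_f)
  have kM: "k \<in> Mon_fix S" unfolding Mon_fix_def Mon_def using kinj k0 kom kfix by auto
  then have "act k y = y" using sup unfolding supported_on_def by auto
  moreover have "h \<circ> k = f" using hk by auto
  moreover have "k \<in> Mon" using kM unfolding Mon_fix_def by auto
  ultimately show ?thesis using M h y unfolding M_set_def by metis
qed

lemma part1:
  assumes M: "M_set X act" and y: "y \<in> X" and sup: "supported_on act y S"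
    and S: "S \<subseteq> omega" and ci: "co_infinite S"
    and f: "f \<in> Mon" and g: "g \<in> Mon" and agree: "\<forall>a\<in>S. f a = g a"
  shows "act f y = act g y"
proof -
  define B where "B = omega - S"
  have Binf: "infinite B" using ci unfolding co_infinite_def B_def .
  define C where "C = f ` B \<union> g ` B"
  have finj: "inj f" and ginj: "inj g" using f g unfolding Mon_def by auto
  have "infinite (f ` B)" using Binf inj_on_subset[OF finj subset_UNIV] finite_image_iff by blast
  then have Cinf: "infinite C" unfolding C_def by simp
  have BO: "B \<subseteq> omega" unfolding B_def by auto
  have Com: "C \<subseteq> omega" unfolding C_def using BO f g unfolding Mon_def by auto
  have Cdis: "C \<inter> f ` S = {}"
  proof -
    have "f b \<noteq> f a" if "b \<in> B" "a \<in> S" for a b using that finj unfolding B_def by (auto dest: injD)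
    moreover have "g b \<noteq> f a" if "b \<in> B" "a \<in> S" for a b
    proof
      assume "g b = f a"
      then have "g b = g a" using agree that by simp
      then have "b = a" using ginj by (simp add: inj_eq)
      then show False using that unfolding B_def by simp
    qed
    ultimately show ?thesis unfolding C_def by blast
  qed
  have fSo: "f ` S \<subseteq> omega" using S f unfolding Mon_def by auto
  define idx where "idx = the_inv_into UNIV (enumerate B)"
  have bijB: "bij_betw (enumerate B) UNIV B" using bij_enumerate[OF Binf] .
  have bidx: "bij_betw idx B UNIV" unfolding idx_def using bij_betw_the_inv_into[OF bijB] .
  define h where "h = (\<lambda>n. if n \<in> S then f n else if n = 0 then 0 else enumerate C (idx n))"
  have hM: "h \<in> Mon" unfolding h_def
  proof (rule ext_Mon[OF S])
    show "inj_on f S" using inj_on_subset[OF finj subset_UNIV] .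
    show "f ` S \<subseteq> omega" using fSo .
    show "C \<subseteq> omega - f ` S" using Com Cdis by blast
    show "infinite C" using Cinf .
    show "inj_on idx (omega - S)" using bidx unfolding B_def bij_betw_def by simp
  qed
  have hB: "h ` B = C"
  proof -
    have "h ` B = (\<lambda>n. enumerate C (idx n)) ` B"
    proof (rule image_cong[OF refl])
      fix n assume "n \<in> B"
      then have "n \<notin> S" "n \<noteq> 0" unfolding B_def omega_def by auto
      then show "h n = enumerate C (idx n)" unfolding h_def by simp
    qed
    also have "\<dots> = enumerate C ` idx ` B" by (simp add: image_image)
    also have "idx ` B = UNIV" using bidx unfolding bij_betw_def by auto
    also have "enumerate C ` UNIV = C" using bij_enumerate[OF Cinf] unfolding bij_betw_def by auto
    finally show ?thesis .
  qed
  have rng: "range f \<subseteq> range h" "range g \<subseteq> range h"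
  proof -
    have h0: "h 0 = 0" and f0: "f 0 = 0" and g0: "g 0 = 0" using hM f g unfolding Mon_def by auto
    have "f n \<in> range h \<and> g n \<in> range h" for n
    proof (cases "n \<in> S")
      case True
      then have "h n = f n" "h n = g n" using agree unfolding h_def by auto
      then show ?thesis by (metis rangeI)
    next
      case False
      show ?thesis
      proof (cases "n = 0")
        case True
        then have "h n = f n" "h n = g n" using h0 f0 g0 by auto
        then show ?thesis by (metis rangeI)
      next
        case False
        then have "n \<in> B" using \<open>n \<notin> S\<close> unfolding B_def omega_def by auto
        then have "f n \<in> h ` B" "g n \<in> h ` B" using hB unfolding C_def by auto
        then show ?thesis by auto
      qed
    qed
    then show "range f \<subseteq> range h" "range g \<subseteq> range h" by auto
  qed
  have ah: "\<forall>a\<in>S. f a = h a" "\<forall>a\<in>S. g a = h a" using agree unfolding h_def by auto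
  show ?thesis
    using range_lemma[OF M y sup f hM ah(1) rng(1)] range_lemma[OF M y sup g hM ah(2) rng(2)] by simp
qed

lemma part2:
  assumes M: "M_set X act" and y: "y \<in> X" and sup: "supported_on act y S"
    and S: "S \<subseteq> omega" and ci: "co_infinite S" and f: "f \<in> Mon"
  shows "supported_on act (act f y) (f ` S)"
  unfolding supported_on_def
proof
  fix g assume g: "g \<in> Mon_fix (f ` S)"
  then have gM: "g \<in> Mon" unfolding Mon_fix_def by auto
  have "act (g \<circ> f) y = act f y"
    by (rule part1[OF M y sup S ci Mon_comp[OF gM f] f]) (use g in \<open>auto simp: Mon_fix_def\<close>)
  then show "act g (act f y) = act f y" using act_comp[OF M gM f y] by simp
qed

theorem lemma1p3:
  fixes X :: "'x set" and act :: "(nat \<Rightarrow> nat) \<Rightarrow> 'x \<Rightarrow> 'x"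
    and A :: "nat set" and x :: 'x
  assumes "M_set X act"
    and "A \<subseteq> omega" and "co_infinite A"
    and "x \<in> X" and "supported_on act x A"
  shows "(\<forall>f\<in>Mon. \<forall>g\<in>Mon. (\<forall>a\<in>A. f a = g a) \<longrightarrow> act f x = act g x)
       \<and> (\<forall>f\<in>Mon. supported_on act (act f x) (f ` A))
       \<and> (\<forall>f\<in>Mon. \<forall>A'. A' \<subseteq> A \<and> supported_on act (act f x) (f ` A')
                      \<longrightarrow> supported_on act x A')"
proof (intro conjI ballI allI impI)
  fix f g assume "f \<in> Mon" "g \<in> Mon" "\<forall>a\<in>A. f a = g a"
  then show "act f x = act g x" by (rule part1[OF assms(1,4,5,2,3)])
next
  fix f assume "f \<in> Mon"
  then show "supported_on act (act f x) (f ` A)" by (rule part2[OF assms(1,4,5,2,3)])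
next
  fix f A' assume f: "f \<in> Mon" and h: "A' \<subseteq> A \<and> supported_on act (act f x) (f ` A')"
  have finj: "inj f" using f unfolding Mon_def by auto
  define r where "r = (\<lambda>n. if n \<in> f ` A then inv f n else if n = 0 then 0 else enumerate (omega - A) (id n))"
  have fAo: "f ` A \<subseteq> omega" using assms(2) f unfolding Mon_def by auto
  have iA: "inv f ` f ` A = A" using finj by (simp add: image_comp)
  have rM: "r \<in> Mon" unfolding r_def
  proof (rule ext_Mon[OF fAo])
    show "inj_on (inv f) (f ` A)" by (rule inj_on_inv_into) blast
    show "inv f ` f ` A \<subseteq> omega" using iA assms(2) by simp
    show "omega - A \<subseteq> omega - inv f ` f ` A" using iA by simp
    show "infinite (omega - A)" using assms(3) unfolding co_infinite_def .
    show "inj_on id (omega - f ` A)" by simp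
  qed
  have rf: "\<forall>a\<in>A. (r \<circ> f) a = id a" unfolding r_def using finj by (auto simp: inv_f_f)
  have "act (r \<circ> f) x = act id x"
    by (rule part1[OF assms(1,4,5,2,3) Mon_comp[OF rM f] Mon_id rf])
  then have rx: "act r (act f x) = x" using act_comp[OF assms(1) rM f assms(4)] act_id[OF assms(1,4)] by simp
  have fx: "act f x \<in> X" using assms(1,4) f unfolding M_set_def by auto
  have fA'o: "f ` A' \<subseteq> omega" using h fAo by auto
  have ci': "co_infinite (f ` A')" unfolding co_infinite_def
  proof
    assume fin: "finite (omega - f ` A')"
    have "f ` (omega - A) \<subseteq> omega - f ` A'"
    proof
      fix z assume "z \<in> f ` (omega - A)"
      then obtain b where b: "b \<in> omega" "b \<notin> A" "z = f b" by blast
      have "z \<in> omega" using b f unfolding Mon_def by blast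
      moreover have "z \<notin> f ` A'"
      proof
        assume "z \<in> f ` A'"
        then obtain a where "a \<in> A'" "f a = f b" using b by blast
        then have "a = b" using finj by (simp add: inj_eq)
        then show False using \<open>a \<in> A'\<close> h b by blast
      qed
      ultimately show "z \<in> omega - f ` A'" by blast
    qed
    then have "finite (f ` (omega - A))" using fin finite_subset by blast
    then have "finite (omega - A)" using finj finite_imageD inj_on_subset by blast
    then show False using assms(3) unfolding co_infinite_def by simp
  qed
  have "supported_on act (act r (act f x)) (r ` f ` A')"
    using part2[OF assms(1) fx _ fA'o ci' rM] h by blast
  moreover have "r ` f ` A' = A'"
  proof -
    have "r ` f ` A' = (r \<circ> f) ` A'" by (simp add: image_comp)
    also have "\<dots> = id ` A'" using rf h by (intro image_cong) auto
    finally show ?thesis by simp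
  qed
  ultimately show "supported_on act x A'" using rx by simp
qed

end
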